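(* The class of split graphs is degree sandwich monotone; that is, for every split graph $G$ and every set $F\subseteq E(G)$ such that $G-F$ is a split graph, every degree-minimal edge $e$ in $F$ satisfies that $G-e$ is a split graph.
   Context: A split graph is a graph whose vertex set can be partitioned into a clique and an independent set. Given a graph $G$ and $F\subseteq E(G)$, an edge $e\in F$ is degree-minimal in $F$ if its endpoints can be named $u,v$ so that (i) $u$ has the smallest degree in $G$ among all vertices incident to an edge of $F$, and (ii) $v$ has the smallest degree in $G$ among all vertices $w$ with $uw\in F$. *)

theory Defs
  imports Main
begin

definition simple_graph :: "'a set \<Rightarrow> 'a set set \<Rightarrow> bool" where
  "simple_graph V E \<longleftrightarrow> finite V \<and> (\<forall>e\<in>E. e \<subseteq> V \<and> card e = 2)"

definition degree :: "'a set set \<Rightarrow> 'a \<Rightarrow> nat" where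
  "degree E v = card {e \<in> E. v \<in> e}"

definition is_clique :: "'a set set \<Rightarrow> 'a set \<Rightarrow> bool" where
  "is_clique E K \<longleftrightarrow> (\<forall>x\<in>K. \<forall>y\<in>K. x \<noteq> y \<longrightarrow> {x, y} \<in> E)"

definition is_independent :: "'a set set \<Rightarrow> 'a set \<Rightarrow> bool" where
  "is_independent E I \<longleftrightarrow> (\<forall>x\<in>I. \<forall>y\<in>I. {x, y} \<notin> E)"

definition split_graph :: "'a set \<Rightarrow> 'a set set \<Rightarrow> bool" where
  "split_graph V E \<longleftrightarrow> (\<exists>K I. K \<union> I = V \<and> K \<inter> I = {} \<and> is_clique E K \<and> is_independent E I)"

definition degree_minimal :: "'a set set \<Rightarrow> 'a set set \<Rightarrow> 'a set \<Rightarrow> bool" where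
  "degree_minimal E F e \<longleftrightarrow> e \<in> F \<and> (\<exists>u v. e = {u, v} \<and>
      (\<forall>x \<in> \<Union>F. degree E u \<le> degree E x) \<and>
      (\<forall>w. {u, w} \<in> F \<longrightarrow> degree E v \<le> degree E w))"

end

theory Submission
  imports Defs
begin

lemma two_elem: "card e = 2 \<Longrightarrow> x \<in> e \<Longrightarrow> \<exists>y. y \<noteq> x \<and> e = {x,y}"
  by (auto simp: card_2_iff)

lemma deg_le:
  assumes "finite A" "\<forall>ed\<in>E. x\<in>ed \<longrightarrow> (\<exists>y\<in>A. ed={x,y})"
  shows "degree E x \<le> card A"
proof -
  have "{ed\<in>E. x\<in>ed} \<subseteq> (\<lambda>y. {x,y}) ` A" using assms(2) by blast
  hence "card {ed\<in>E. x\<in>ed} \<le> card ((\<lambda>y. {x,y}) ` A)"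
    by (intro card_mono) (auto intro: finite_imageI assms(1))
  also have "... \<le> card A" by (rule card_image_le[OF assms(1)])
  finally show ?thesis unfolding degree_def .
qed

lemma deg_ge:
  assumes "finite E" "\<forall>y\<in>B. {x,y}\<in>E" "x\<notin>B"
  shows "card B \<le> degree E x"
proof -
  have inj: "inj_on (\<lambda>y. {x,y}) B" using assms(3) by (auto simp: inj_on_def doubleton_eq_iff)
  have "(\<lambda>y. {x,y}) ` B \<subseteq> {ed\<in>E. x\<in>ed}" using assms(2) by auto
  hence "card ((\<lambda>y. {x,y}) ` B) \<le> card {ed\<in>E. x\<in>ed}" by (intro card_mono) (auto simp: assms(1))
  thus ?thesis using card_image[OF inj] unfolding degree_def by simp
qed

theorem theorem4p1:
  fixes V :: "'a set" and E F :: "'a set set" and e :: "'a set"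
  assumes "simple_graph V E"
    and "split_graph V E"
    and "F \<subseteq> E"
    and "split_graph V (E - F)"
    and "degree_minimal E F e"
  shows "split_graph V (E - {e})"
proof -
  have finV: "finite V" and Ecard: "\<forall>ed\<in>E. ed \<subseteq> V \<and> card ed = 2"
    using assms(1) unfolding simple_graph_def by auto
  have finE: "finite E"
    by (meson Ecard PowI finite_Pow_iff finite_subset subsetI finV)
  define P where "P = (\<lambda>KI. fst KI \<union> snd KI = V \<and> fst KI \<inter> snd KI = {} \<and> is_clique E (fst KI) \<and> is_independent E (snd KI))"
  have "\<exists>KI. P KI" using assms(2) unfolding split_graph_def P_def by auto
  then obtain KI0 where "P KI0" by blast
  moreover have "\<forall>y. P y \<longrightarrow> (\<lambda>KI. card (fst KI)) y < Suc (card V)"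
  proof (intro allI impI)
    fix y assume "P y"
    hence "fst y \<subseteq> V" unfolding P_def by auto
    hence "card (fst y) \<le> card V" by (rule card_mono[OF finV])
    thus "(\<lambda>KI. card (fst KI)) y < Suc (card V)" by simp
  qed
  ultimately obtain KI where PKI: "P KI" and mx: "\<forall>y. P y \<longrightarrow> card (fst y) \<le> card (fst KI)"
    using Lattices_Big.ex_has_greatest_nat[of P KI0 "\<lambda>KI. card (fst KI)" "Suc (card V)"] by auto
  obtain K I where KIdef: "KI = (K, I)" by (cases KI)
  have KV: "K \<union> I = V" and KId: "K \<inter> I = {}" and Kc: "is_clique E K" and Ii: "is_independent E I"
    using PKI KIdef unfolding P_def by auto
  have finK: "finite K" using KV finV by auto
  obtain u v where eF: "e \<in> F" and euv: "e = {u,v}"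
    and umin: "\<forall>x \<in> \<Union>F. degree E u \<le> degree E x"
    using assms(5) unfolding degree_minimal_def by blast
  have eE: "e \<in> E" using eF assms(3) by auto
  have uv: "u \<noteq> v" using Ecard eE euv by fastforce
  have gen: "split_graph V (E - {e})" if w: "w \<in> K" "\<forall>y\<in>I. {w,y} \<notin> E" "e = {w,w'}" for w w'
  proof -
    have "w \<notin> I" using w KId by auto
    have "K - {w} \<union> insert w I = V" using KV w by auto
    moreover have "(K - {w}) \<inter> insert w I = {}" using KId by auto
    moreover have "is_clique (E - {e}) (K - {w})"
      using Kc w(3) unfolding is_clique_def by (auto simp: doubleton_eq_iff)
    moreover have "is_independent (E - {e}) (insert w I)"
      unfolding is_independent_def
    proof (intro ballI)
      fix x y assume xy: "x \<in> insert w I" "y \<in> insert w I"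
      show "{x,y} \<notin> E - {e}"
      proof (cases "x = w")
        case True
        then show ?thesis
        proof (cases "y = w")
          case True
          then show ?thesis using Ecard \<open>x = w\<close> by fastforce
        next
          case False
          then show ?thesis using w(2) xy \<open>x = w\<close> by auto
        qed
      next
        case False
        then show ?thesis
        proof (cases "y = w")
          case True
          then show ?thesis using w(2) xy \<open>x \<noteq> w\<close> by (auto simp: insert_commute)
        next
          case False
          then show ?thesis using Ii xy \<open>x \<noteq> w\<close> unfolding is_independent_def by auto
        qed
      qed
    qed
    ultimately show ?thesis unfolding split_graph_def by blast
  qed
  show ?thesis
  proof (cases "u \<in> K \<and> v \<in> K")
    case False
    have "is_clique (E - {e}) K"
      using Kc False euv unfolding is_clique_def by (auto simp: doubleton_eq_iff)
    moreover have "is_independent (E - {e}) I" using Ii unfolding is_independent_def by auto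
    ultimately show ?thesis using KV KId unfolding split_graph_def by blast
  next
    case True
    hence uK: "u \<in> K" and vK: "v \<in> K" by auto
    show ?thesis
    proof (cases "(\<forall>y\<in>I. {u,y} \<notin> E) \<or> (\<forall>y\<in>I. {v,y} \<notin> E)")
      case True
      then show ?thesis using gen[of u v] gen[of v u] uK vK euv by (auto simp: insert_commute)
    next
      case False
      then obtain p where pI: "p \<in> I" and up: "{u,p} \<in> E" by auto
      define k where "k = card K"
      have k1: "k \<ge> 1" using uK finK k_def card_0_eq by fastforce
      have degu: "k \<le> degree E u"
      proof -
        have "p \<notin> K" using pI KId by auto
        hence "card (insert p (K - {u})) = k" using finK uK k_def k1 by auto
        moreover have "card (insert p (K - {u})) \<le> degree E u"
        proof (rule deg_ge[OF finE])
          show "\<forall>y\<in>insert p (K - {u}). {u, y} \<in> E" using up Kc uK unfolding is_clique_def by auto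
          show "u \<notin> insert p (K - {u})" using pI uK KId by auto
        qed
        ultimately show ?thesis by simp
      qed
      have noadj: "\<forall>y\<in>I. \<exists>z\<in>K. {y,z} \<notin> E"
      proof (rule ccontr)
        assume "\<not> ?thesis"
        then obtain y where yI: "y \<in> I" and ya: "\<forall>z\<in>K. {y,z} \<in> E" by auto
        have "P (insert y K, I - {y})"
          unfolding P_def using KV KId yI ya Kc Ii
          unfolding is_clique_def is_independent_def by (auto simp: insert_commute)
        hence "card (insert y K) \<le> k" using mx KIdef k_def by fastforce
        moreover have "y \<notin> K" using yI KId by auto
        ultimately show False using finK k_def by simp
      qed
      have degI: "\<forall>y\<in>I. degree E y < k"
      proof
        fix y assume yI: "y \<in> I"
        then obtain z where zK: "z \<in> K" and yz: "{y,z} \<notin> E" using noadj by auto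
        have "degree E y \<le> card (K - {z})"
        proof (rule deg_le)
          show "finite (K - {z})" using finK by auto
          show "\<forall>ed\<in>E. y \<in> ed \<longrightarrow> (\<exists>x\<in>K - {z}. ed = {y, x})"
          proof (intro ballI impI)
            fix ed assume edE: "ed \<in> E" and yed: "y \<in> ed"
            have "card ed = 2" using Ecard edE by auto
            then obtain x where xy: "x \<noteq> y" "ed = {y,x}" using two_elem[OF _ yed] by blast
            have "x \<in> V" using Ecard edE xy by auto
            moreover have "x \<notin> I" using Ii yI edE xy unfolding is_independent_def by auto
            ultimately have "x \<in> K" using KV by auto
            moreover have "x \<noteq> z" using yz edE xy by auto
            ultimately show "\<exists>x\<in>K - {z}. ed = {y, x}" using xy by auto
          qed
        qed
        thus "degree E y < k" using zK finK k_def k1 by auto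
      qed
      have FI: "\<forall>x\<in>\<Union>F. x \<notin> I"
        using umin degu degI by fastforce
      have degK: "\<exists>t\<in>I. {x,t} \<in> E" if xK: "x \<in> K" and xF: "x \<in> \<Union>F" for x
      proof (rule ccontr)
        assume nt: "\<not> ?thesis"
        have "degree E x \<le> card (K - {x})"
        proof (rule deg_le)
          show "finite (K - {x})" using finK by auto
          show "\<forall>ed\<in>E. x \<in> ed \<longrightarrow> (\<exists>y\<in>K - {x}. ed = {x, y})"
          proof (intro ballI impI)
            fix ed assume edE: "ed \<in> E" and xed: "x \<in> ed"
            have "card ed = 2" using Ecard edE by auto
            then obtain y where xy: "y \<noteq> x" "ed = {x,y}" using two_elem[OF _ xed] by blast
            have "y \<in> V" using Ecard edE xy by auto
            moreover have "y \<notin> I" using nt edE xy by auto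
            ultimately show "\<exists>y\<in>K - {x}. ed = {x, y}" using KV xy by auto
          qed
        qed
        thus False using xK finK k_def k1 degu umin xF by fastforce
      qed
      obtain K' I' where KV': "K' \<union> I' = V" and KId': "K' \<inter> I' = {}"
        and Kc': "is_clique (E - F) K'" and Ii': "is_independent (E - F) I'"
        using assms(4) unfolding split_graph_def by blast
      obtain w where w: "w = u \<or> w = v" and wI': "w \<in> I'"
      proof -
        have "u \<in> I' \<or> v \<in> I'"
        proof (rule ccontr)
          assume "\<not> ?thesis"
          hence "u \<in> K'" "v \<in> K'" using KV' uK vK KV by auto
          hence "{u,v} \<in> E - F" using Kc' uv unfolding is_clique_def by auto
          thus False using eF euv by auto
        qed
        thus ?thesis using that by blast
      qed
      have wK: "w \<in> K" using w uK vK by auto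
      have wF: "w \<in> \<Union>F" using w eF euv by auto
      obtain r where rI: "r \<in> I" and wr: "{w,r} \<in> E" using degK[OF wK wF] by auto
      have rF: "r \<notin> \<Union>F" using FI rI by auto
      have wrF: "{w,r} \<notin> F" using rF by auto
      have rK': "r \<in> K'"
      proof (rule ccontr)
        assume "r \<notin> K'"
        hence "r \<in> I'" using KV' KV rI by auto
        thus False using Ii' wI' wr wrF unfolding is_independent_def by auto
      qed
      have radj: "\<forall>x\<in>K. {r,x} \<in> E"
      proof
        fix x assume xK: "x \<in> K"
        have rx: "r \<noteq> x" using rI xK KId by auto
        show "{r,x} \<in> E"
        proof (cases "x \<in> K'")
          case True
          then show ?thesis using Kc' rK' rx unfolding is_clique_def by auto
        next
          case False
          hence xI': "x \<in> I'" using KV' KV xK by auto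
          show ?thesis
          proof (cases "x = w")
            case True
            then show ?thesis using wr by (auto simp: insert_commute)
          next
            case False
            hence "{x,w} \<in> E" using Kc xK wK unfolding is_clique_def by auto
            moreover have "{x,w} \<notin> E - F" using Ii' xI' wI' unfolding is_independent_def by auto
            ultimately have "{x,w} \<in> F" by auto
            hence xF: "x \<in> \<Union>F" by auto
            obtain t where tI: "t \<in> I" and xt: "{x,t} \<in> E" using degK[OF xK xF] by auto
            have "{x,t} \<notin> F" using FI tI by auto
            hence xtEF: "{x,t} \<in> E - F" using xt by auto
            have tK': "t \<in> K'"
            proof (rule ccontr)
              assume "t \<notin> K'"
              hence "t \<in> I'" using KV' KV tI by auto
              thus False using Ii' xI' xtEF unfolding is_independent_def by auto
            qed
            have "t = r"
            proof (rule ccontr)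
              assume "t \<noteq> r"
              hence "{r,t} \<in> E" using Kc' rK' tK' unfolding is_clique_def by auto
              thus False using Ii rI tI unfolding is_independent_def by auto
            qed
            thus ?thesis using xt by (auto simp: insert_commute)
          qed
        qed
      qed
      then show ?thesis using noadj rI by auto
    qed
  qed
qed

end
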